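(* Let $V$ be a finite nonempty set, $c\in\mathbb{R}^{P_V}$, $U,U'\subseteq V$ disjoint, $U''=V\setminus(U\cup U')$, $i\in U$, $j\in U'$, and $\hat x$ a maximally specific partial function on $P_V$. Let $P'_{01}=\{pq\in U\times U'\mid \hat x_{pi}\neq 0\neq \hat x_{jq}\}\setminus\hat x^{-1}(1)$ and $P'_{10}=\big((U''\times U)\cup(U'\times U)\cup(U'\times U'')\big)\setminus\hat x^{-1}(0)$. If $\gamma^{ij|1}(X_V[\hat x])\subseteq X_V[\hat x]$ and $$c_{ij}^+\ \ge\ \sum_{pq\in P'_{01}}c_{pq}^- + \sum_{pq\in P'_{10}}c_{pq}^+,$$ then there is a maximizer $x^*$ of $\varphi_c$ over $X_V[\hat x]$ with $x^*_{ij}=1$.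
   Context: $P_V=\{pq\in V^2\mid p\neq q\}$; $X_V$ is the set of $x\in\{0,1\}^{P_V}$ with $x_{pq}+x_{qr}-x_{pr}\le 1$ for all pairwise distinct $p,q,r\in V$; $\varphi_c(x)=\sum_{pq\in P_V}c_{pq}x_{pq}$. A partial function $\tilde x$ is a map from $\operatorname{dom}(\tilde x)\subseteq P_V$ to $\{0,1\}$, $\tilde x^{-1}(b)$ the pairs mapped to $b$; convention $\tilde x_{aa}=1$ and $x_{aa}=1$ for all $a\in V$, $x\in X_V$. $X_V[\tilde x]=\{x\in X_V\mid x_{pq}=\tilde x_{pq}\ \forall pq\in\operatorname{dom}(\tilde x)\}$. A pair $pq$ is decided if $x_{pq}=x'_{pq}$ for all $x,x'\in X_V[\tilde x]$; $\tilde x$ is maximally specific if $X_V[\tilde x]\ne\emptyset$ and the decided pairs are exactly $\operatorname{dom}(\tilde x)$. For $A,B\subseteq V$ disjoint with $A\cup B=V$, $\sigma_{A\times B}\colon X_V\to X_V$ sets $\sigma_{A\times B}(x)_{pq}=0$ if $pq\in A\times B$ and $=x_{pq}$ otherwise. For $ij\in P_V$, $\sigma_{ij}\colon X_V\to X_V$ sets $\sigma_{ij}(x)_{pq}=1$ if $x_{pi}=x_{jq}=1$ and $=x_{pq}$ otherwise. Let $\gamma=\sigma_{ij}\circ\sigma_{(V\setminus U)\times U}\circ\sigma_{U'\times(V\setminus U')}$ and $\gamma^{ij|1}\colon X_V[\hat x]\to X_V$ with $\gamma^{ij|1}(x)=x$ if $x_{ij}=1$ and $\gamma^{ij|1}(x)=\gamma(x)$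 if $x_{ij}=0$. For real $a$: $a^+=\max(a,0)$, $a^-=\max(-a,0)$. *)

theory Defs
  imports Complex_Main
begin

text \<open>Points of \<open>{0,1}^{P_V}\<close> are represented as functions \<open>'a \<times> 'a \<Rightarrow> int\<close> with
  values in \<open>{0,1}\<close> on \<open>P_V\<close>, the convention \<open>x_aa = 1\<close> for \<open>a \<in> V\<close> built in,
  and value 0 outside \<open>V \<times> V\<close> (canonical extension).\<close>

definition PV :: "'a set \<Rightarrow> ('a \<times> 'a) set" where
  "PV V = {(p, q). p \<in> V \<and> q \<in> V \<and> p \<noteq> q}"

definition XV :: "'a set \<Rightarrow> ('a \<times> 'a \<Rightarrow> int) set" where
  "XV V = {x. (\<forall>pq \<in> PV V. x pq \<in> {0, 1})
            \<and> (\<forall>a \<in> V. x (a, a) = 1)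
            \<and> (\<forall>pq. pq \<notin> V \<times> V \<longrightarrow> x pq = 0)
            \<and> (\<forall>p \<in> V. \<forall>q \<in> V. \<forall>r \<in> V. p \<noteq> q \<and> q \<noteq> r \<and> p \<noteq> r \<longrightarrow>
                  x (p, q) + x (q, r) - x (p, r) \<le> 1)}"

definition phi :: "('a \<times> 'a \<Rightarrow> real) \<Rightarrow> 'a set \<Rightarrow> ('a \<times> 'a \<Rightarrow> int) \<Rightarrow> real" where
  "phi c V x = (\<Sum>pq \<in> PV V. c pq * of_int (x pq))"

definition XVr :: "'a set \<Rightarrow> ('a \<times> 'a \<Rightarrow> int option) \<Rightarrow> ('a \<times> 'a \<Rightarrow> int) set" where
  "XVr V xt = {x \<in> XV V. \<forall>pq \<in> dom xt. Some (x pq) = xt pq}"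

definition decided :: "'a set \<Rightarrow> ('a \<times> 'a \<Rightarrow> int option) \<Rightarrow> ('a \<times> 'a) \<Rightarrow> bool" where
  "decided V xt pq \<longleftrightarrow> (\<forall>x \<in> XVr V xt. \<forall>x' \<in> XVr V xt. x pq = x' pq)"

definition partial_fun_on :: "'a set \<Rightarrow> ('a \<times> 'a \<Rightarrow> int option) \<Rightarrow> bool" where
  "partial_fun_on V xt \<longleftrightarrow> dom xt \<subseteq> PV V \<and> ran xt \<subseteq> {0, 1}"

definition maximally_specific :: "'a set \<Rightarrow> ('a \<times> 'a \<Rightarrow> int option) \<Rightarrow> bool" where
  "maximally_specific V xt \<longleftrightarrow>
     XVr V xt \<noteq> {} \<and> {pq \<in> PV V. decided V xt pq} = dom xt"

definition sigma_cut :: "'a set \<Rightarrow> 'a set \<Rightarrow> ('a \<times> 'a \<Rightarrow> int) \<Rightarrow> ('a \<times> 'a \<Rightarrow> int)" where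
  "sigma_cut A B x = (\<lambda>pq. if pq \<in> A \<times> B then 0 else x pq)"

definition sigma_join :: "'a set \<Rightarrow> 'a \<Rightarrow> 'a \<Rightarrow> ('a \<times> 'a \<Rightarrow> int) \<Rightarrow> ('a \<times> 'a \<Rightarrow> int)" where
  "sigma_join V i j x = (\<lambda>(p, q). if (p, q) \<in> PV V \<and> x (p, i) = 1 \<and> x (j, q) = 1 then 1 else x (p, q))"

definition gamma :: "'a set \<Rightarrow> 'a set \<Rightarrow> 'a set \<Rightarrow> 'a \<Rightarrow> 'a \<Rightarrow> ('a \<times> 'a \<Rightarrow> int) \<Rightarrow> ('a \<times> 'a \<Rightarrow> int)" where
  "gamma V U U' i j = sigma_join V i j \<circ> sigma_cut (V - U) U \<circ> sigma_cut U' (V - U')"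

definition gamma1 :: "'a set \<Rightarrow> 'a set \<Rightarrow> 'a set \<Rightarrow> 'a \<Rightarrow> 'a \<Rightarrow> ('a \<times> 'a \<Rightarrow> int) \<Rightarrow> ('a \<times> 'a \<Rightarrow> int)" where
  "gamma1 V U U' i j x = (if x (i, j) = 1 then x else gamma V U U' i j x)"

definition pos_part :: "real \<Rightarrow> real" where "pos_part a = max a 0"
definition neg_part :: "real \<Rightarrow> real" where "neg_part a = max (- a) 0"

end

theory Submission
  imports Defs
begin

lemma XV_finite:
  assumes "finite V"
  shows "finite (XV V)"
proof -
  have "XV V \<subseteq> {f. \<forall>x. (x \<in> V \<times> V \<longrightarrow> f x \<in> {0,1}) \<and> (x \<notin> V \<times> V \<longrightarrow> f x = 0)}"
    unfolding XV_def PV_def by auto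
  moreover have "finite {f::'a\<times>'a\<Rightarrow>int. \<forall>x. (x \<in> V \<times> V \<longrightarrow> f x \<in> {0,1}) \<and> (x \<notin> V \<times> V \<longrightarrow> f x = 0)}"
    by (rule finite_set_of_finite_funs) (use assms in auto)
  ultimately show ?thesis by (rule finite_subset)
qed

lemma XV_vals:
  assumes "x \<in> XV V" "p \<in> V" "q \<in> V"
  shows "x (p, q) = 0 \<or> x (p, q) = 1"
  using assms unfolding XV_def PV_def by (cases "p = q") auto

lemma improve:
  fixes V U U' :: "'a set" and c :: "'a \<times> 'a \<Rightarrow> real"
    and i j :: 'a and xh :: "'a \<times> 'a \<Rightarrow> int option"
  assumes "finite V"
    and "U \<subseteq> V" and "U' \<subseteq> V" and "U \<inter> U' = {}"
    and "i \<in> U" and "j \<in> U'"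
    and "partial_fun_on V xh"
    and hc: "pos_part (c (i, j)) \<ge>
           (\<Sum>pq \<in> {(p, q) \<in> U \<times> U'. xh (p, i) \<noteq> Some 0 \<and> xh (j, q) \<noteq> Some 0}
                    - {pq. xh pq = Some 1}. neg_part (c pq))
         + (\<Sum>pq \<in> (((V - (U \<union> U')) \<times> U) \<union> (U' \<times> U) \<union> (U' \<times> (V - (U \<union> U'))))
                    - {pq. xh pq = Some 0}. pos_part (c pq))"
    and x: "x \<in> XVr V xh" and x0: "x (i, j) = 0"
  shows "phi c V x \<le> phi c V (gamma V U U' i j x)"
proof -
  define A01 where "A01 = {(p, q) \<in> U \<times> U'. xh (p, i) \<noteq> Some 0 \<and> xh (j, q) \<noteq> Some 0}
                    - {pq. xh pq = Some 1}"
  define A10 where "A10 = (((V - (U \<union> U')) \<times> U) \<union> (U' \<times> U) \<union> (U' \<times> (V - (U \<union> U'))))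
                    - {pq. xh pq = Some 0}"
  define x' where "x' = gamma V U U' i j x"
  define y where "y = (\<lambda>pq. if pq \<in> (V - U) \<times> U then 0 else if pq \<in> U' \<times> (V - U') then 0 else x pq)"
  have x'y: "x' (p, q) = (if (p, q) \<in> PV V \<and> y (p, i) = 1 \<and> y (j, q) = 1 then 1 else y (p, q))" for p q
    unfolding x'_def y_def gamma_def sigma_join_def sigma_cut_def by auto
  have xX: "x \<in> XV V" and xh_agree: "\<And>pq. pq \<in> dom xh \<Longrightarrow> Some (x pq) = xh pq"
    using x unfolding XVr_def by auto
  have domPV: "dom xh \<subseteq> PV V" using assms(7) unfolding partial_fun_on_def by auto
  have iV: "i \<in> V" and jV: "j \<in> V" using assms by auto
  have ij: "i \<noteq> j" using assms by auto
  have ijPV: "(i, j) \<in> PV V" using iV jV ij unfolding PV_def by auto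
  define g where "g = (\<lambda>pq. (if pq = (i, j) then c (i, j) else 0)
       - (if pq \<in> A01 - {(i,j)} then neg_part (c pq) else 0)
       - (if pq \<in> A10 then pos_part (c pq) else 0))"
  have ijA10: "(i, j) \<notin> A10" using assms unfolding A10_def by auto
  have yle: "y pq = 0 \<or> y pq = x pq" for pq unfolding y_def by auto
  have pw: "g pq \<le> c pq * (of_int (x' pq) - of_int (x pq))" if pq: "pq \<in> PV V" for pq
  proof -
    obtain p q where pqe: "pq = (p, q)" by (cases pq)
    have pV: "p \<in> V" and qV: "q \<in> V" and pq_ne: "p \<noteq> q" using pq pqe unfolding PV_def by auto
    have xv: "x (p, q) = 0 \<or> x (p, q) = 1" using XV_vals[OF xX pV qV] .
    have gA: "g pq \<le> 0" if "pq \<noteq> (i, j)"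
      using that unfolding g_def pos_part_def neg_part_def by auto
    show ?thesis
    proof (cases "(p, q) \<in> PV V \<and> y (p, i) = 1 \<and> y (j, q) = 1")
      case True
      hence x'1: "x' (p, q) = 1" using x'y by simp
      show ?thesis
      proof (cases "x (p, q) = 1")
        case True
        have "(p, q) \<noteq> (i, j)" using True x0 by auto
        then show ?thesis using x'1 pqe gA True by auto
      next
        case False
        hence xp0: "x (p, q) = 0" using xv by simp
        have yi: "y (p, i) = 1" and yj: "y (j, q) = 1" using True by auto
        have "x (p, i) = 1" using yi yle[of "(p, i)"] by auto
        have pU: "p \<in> U" using yi pV assms(5) unfolding y_def by (auto split: if_splits)
        have "x (j, q) = 1" using yj yle[of "(j, q)"] by auto
        have qU': "q \<in> U'" using yj qV jV assms(6) unfolding y_def by (auto split: if_splits)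
        have h1: "xh (p, i) \<noteq> Some 0"
        proof
          assume "xh (p, i) = Some 0"
          hence "(p, i) \<in> dom xh" by auto
          from xh_agree[OF this] \<open>x (p, i) = 1\<close> \<open>xh (p, i) = Some 0\<close> show False by simp
        qed
        have h2: "xh (j, q) \<noteq> Some 0"
        proof
          assume "xh (j, q) = Some 0"
          hence "(j, q) \<in> dom xh" by auto
          from xh_agree[OF this] \<open>x (j, q) = 1\<close> \<open>xh (j, q) = Some 0\<close> show False by simp
        qed
        have h3: "xh (p, q) \<noteq> Some 1"
        proof
          assume "xh (p, q) = Some 1"
          hence "(p, q) \<in> dom xh" by auto
          from xh_agree[OF this] xp0 \<open>xh (p, q) = Some 1\<close> show False by simp
        qed
        have inA: "(p, q) \<in> A01" unfolding A01_def using pU qU' h1 h2 h3 by auto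
        have notA10: "(p, q) \<notin> A10" unfolding A10_def using pU qU' assms(4) by auto
        show ?thesis
        proof (cases "(p, q) = (i, j)")
          case True then show ?thesis using x'1 xp0 pqe notA10 unfolding g_def by auto
        next
          case False then show ?thesis using x'1 xp0 pqe notA10 inA
            unfolding g_def neg_part_def by auto
        qed
      qed
    next
      case False
      hence x'e: "x' (p, q) = y (p, q)" using x'y[of p q] by presburger
      show ?thesis
      proof (cases "y (p, q) = x (p, q)")
        case True
        have yii: "y (i, i) = 1" and yjj: "y (j, j) = 1"
          using xX iV jV assms(4,5,6) unfolding y_def XV_def by auto
        have "(p, q) \<noteq> (i, j)" using False ijPV yii yjj by auto
        then show ?thesis using gA pqe x'e True by auto
      next
        case yne: False
        hence y0: "y (p, q) = 0" and xp1: "x (p, q) = 1" using yle[of "(p,q)"] xv by auto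
        have cut: "(p, q) \<in> (V - U) \<times> U \<or> (p, q) \<in> U' \<times> (V - U')"
          using yne unfolding y_def by (auto split: if_splits)
        have h3: "xh (p, q) \<noteq> Some 0"
        proof
          assume "xh (p, q) = Some 0"
          hence "(p, q) \<in> dom xh" by auto
          from xh_agree[OF this] xp1 \<open>xh (p, q) = Some 0\<close> show False by simp
        qed
        have inA: "(p, q) \<in> A10" unfolding A10_def using cut h3 pV qV assms(4) by auto
        have ne: "(p, q) \<noteq> (i, j)" using inA ijA10 by auto
        show ?thesis using inA ne pqe x'e y0 xp1 unfolding g_def pos_part_def neg_part_def by auto
      qed
    qed
  qed
  have finPV: "finite (PV V)"
  proof (rule finite_subset)
    show "PV V \<subseteq> V \<times> V" unfolding PV_def by auto
    show "finite (V \<times> V)" using assms(1) by simp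
  qed
  have A01PV: "A01 \<subseteq> PV V" unfolding A01_def PV_def using assms by auto
  have A10PV: "A10 \<subseteq> PV V" unfolding A10_def PV_def using assms by auto
  have ijA01: "(i, j) \<in> A01"
  proof -
    have "xh (i, i) = None" "xh (j, j) = None" using domPV unfolding PV_def by auto
    moreover have "xh (i, j) \<noteq> Some 1"
    proof
      assume "xh (i, j) = Some 1"
      hence "(i, j) \<in> dom xh" by auto
      from xh_agree[OF this] x0 \<open>xh (i, j) = Some 1\<close> show False by simp
    qed
    ultimately show ?thesis unfolding A01_def using assms(5,6) by auto
  qed
  have sumg: "(\<Sum>pq \<in> PV V. g pq) = c (i, j) - (\<Sum>pq \<in> A01 - {(i,j)}. neg_part (c pq))
      - (\<Sum>pq \<in> A10. pos_part (c pq))"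
  proof -
    have "(\<Sum>pq \<in> PV V. g pq) = (\<Sum>pq \<in> PV V. (if pq = (i, j) then c (i, j) else 0))
       - (\<Sum>pq \<in> PV V. (if pq \<in> A01 - {(i,j)} then neg_part (c pq) else 0))
       - (\<Sum>pq \<in> PV V. (if pq \<in> A10 then pos_part (c pq) else 0))"
      unfolding g_def by (simp add: sum_subtractf)
    also have "(\<Sum>pq \<in> PV V. (if pq = (i, j) then c (i, j) else 0)) = c (i, j)"
      using finPV ijPV by (simp add: sum.delta)
    also have "(\<Sum>pq \<in> PV V. (if pq \<in> A01 - {(i,j)} then neg_part (c pq) else 0))
        = (\<Sum>pq \<in> PV V \<inter> (A01 - {(i,j)}). neg_part (c pq))"
      using finPV by (simp add: sum.inter_restrict)
    also have "PV V \<inter> (A01 - {(i,j)}) = A01 - {(i,j)}" using A01PV by auto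
    also have "(\<Sum>pq \<in> PV V. (if pq \<in> A10 then pos_part (c pq) else 0))
        = (\<Sum>pq \<in> PV V \<inter> A10. pos_part (c pq))"
      using finPV by (simp add: sum.inter_restrict)
    also have "PV V \<inter> A10 = A10" using A10PV by auto
    finally show ?thesis .
  qed
  have finA01: "finite A01" using A01PV finPV finite_subset by auto
  have splitA01: "(\<Sum>pq \<in> A01. neg_part (c pq)) = neg_part (c (i, j)) + (\<Sum>pq \<in> A01 - {(i,j)}. neg_part (c pq))"
    using finA01 ijA01 by (simp add: sum.remove)
  have cij: "c (i, j) = pos_part (c (i, j)) - neg_part (c (i, j))"
    unfolding pos_part_def neg_part_def by auto
  have hc': "pos_part (c (i, j)) \<ge> (\<Sum>pq \<in> A01. neg_part (c pq)) + (\<Sum>pq \<in> A10. pos_part (c pq))"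
    using hc unfolding A01_def A10_def .
  have "0 \<le> (\<Sum>pq \<in> PV V. g pq)" using sumg splitA01 cij hc' by linarith
  also have "\<dots> \<le> (\<Sum>pq \<in> PV V. c pq * (of_int (x' pq) - of_int (x pq)))"
    using pw by (rule sum_mono)
  also have "\<dots> = phi c V x' - phi c V x"
    unfolding phi_def by (simp add: sum_subtractf right_diff_distrib)
  finally show ?thesis unfolding x'_def by simp
qed

theorem proposition6p6:
  fixes V U U' :: "'a set" and c :: "'a \<times> 'a \<Rightarrow> real"
    and i j :: 'a and xh :: "'a \<times> 'a \<Rightarrow> int option"
  assumes "finite V" and "V \<noteq> {}"
    and "U \<subseteq> V" and "U' \<subseteq> V" and "U \<inter> U' = {}"
    and "i \<in> U" and "j \<in> U'"
    and "partial_fun_on V xh" and "maximally_specific V xh"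
    and "gamma1 V U U' i j ` XVr V xh \<subseteq> XVr V xh"
    and "pos_part (c (i, j)) \<ge>
           (\<Sum>pq \<in> {(p, q) \<in> U \<times> U'. xh (p, i) \<noteq> Some 0 \<and> xh (j, q) \<noteq> Some 0}
                    - {pq. xh pq = Some 1}. neg_part (c pq))
         + (\<Sum>pq \<in> (((V - (U \<union> U')) \<times> U) \<union> (U' \<times> U) \<union> (U' \<times> (V - (U \<union> U'))))
                    - {pq. xh pq = Some 0}. pos_part (c pq))"
  shows "\<exists>xs \<in> XVr V xh. (\<forall>x \<in> XVr V xh. phi c V x \<le> phi c V xs) \<and> xs (i, j) = 1"
proof -
  let ?S = "XVr V xh"
  have fin: "finite ?S" using XV_finite[OF assms(1)] unfolding XVr_def by auto
  have ne: "?S \<noteq> {}" using assms(9) unfolding maximally_specific_def by auto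
  have "Max (phi c V ` ?S) \<in> phi c V ` ?S" using fin ne by simp
  then obtain xs where xs: "xs \<in> ?S" "phi c V xs = Max (phi c V ` ?S)" by auto
  have xsmax: "\<forall>x \<in> ?S. phi c V x \<le> phi c V xs" using fin xs(2) by simp
  show ?thesis
  proof (cases "xs (i, j) = 1")
    case True then show ?thesis using xs(1) xsmax by blast
  next
    case False
    have iV: "i \<in> V" and jV: "j \<in> V" using assms by auto
    have "xs \<in> XV V" using xs unfolding XVr_def by auto
    hence x0: "xs (i, j) = 0" using XV_vals[OF _ iV jV] False by blast
    have g1: "gamma1 V U U' i j xs = gamma V U U' i j xs" unfolding gamma1_def using False by simp
    have gin: "gamma V U U' i j xs \<in> ?S" using assms(10) xs(1) g1 by force
    have le: "phi c V xs \<le> phi c V (gamma V U U' i j xs)"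
      by (rule improve[OF assms(1,3,4,5,6,7,8) assms(11) xs(1) x0])
    have ij: "i \<noteq> j" using assms by auto
    have "gamma V U U' i j xs (i, j) = 1"
      using iV jV ij assms(5,6,7)
      unfolding gamma_def sigma_join_def sigma_cut_def PV_def
      using \<open>xs \<in> XV V\<close> unfolding XV_def by auto
    then show ?thesis using gin xsmax le by (intro bexI[of _ "gamma V U U' i j xs"]) auto
  qed
qed

end
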